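(* Let $k\ge1$ and let $\Gamma\subset\mathbb{R}_+^k$ be a nonempty compact set of possible allocations. For every random valuation $X$ with values in $\mathbb{R}_+^k$ and finite expectation ($\mathbb{E}\|X\|<\infty$) there exists an allocation-monotonic (incentive compatible and individually rational) $\Gamma$-mechanism $\mu$ with $R(\mu;X)=\textsc{AMonRev}_\Gamma(X)$.
   Context: A $\Gamma$-mechanism $\mu=(q,s)$ consists of $q:\mathbb{R}_+^k\to\Gamma$ and $s:\mathbb{R}_+^k\to\mathbb{R}$; it is IC if $q(x)\cdot x-s(x)\ge q(y)\cdot x-s(y)$ for all $x,y\in\mathbb{R}_+^k$, and IR if $q(x)\cdot x-s(x)\ge0$ for all $x\in\mathbb{R}_+^k$. It is allocation monotonic if $q(y)\ge q(x)$ (coordinatewise) whenever $y\ge x$ (coordinatewise) in $\mathbb{R}_+^k$. The revenue is $R(\mu;X):=\mathbb{E}[s(X)]$, and $\textsc{AMonRev}_\Gamma(X)$ is the supremum of $R(\mu;X)$ over all allocation-monotonic IC and IR $\Gamma$-mechanisms $\mu$. *)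

theory Defs
  imports "HOL-Probability.Probability"
begin

definition nonneg_orthant :: "(real^'k) set" where
  "nonneg_orthant = {x. \<forall>i. 0 \<le> x $ i}"

text \<open>A Gamma-mechanism (q,s): q maps R_+^k into Gamma (s is any real function on R_+^k).
  Values of q, s outside R_+^k are irrelevant.\<close>
definition is_mechanism :: "(real^'k) set \<Rightarrow> (real^'k \<Rightarrow> real^'k) \<Rightarrow> (real^'k \<Rightarrow> real) \<Rightarrow> bool" where
  "is_mechanism \<Gamma> q s = (\<forall>x\<in>nonneg_orthant. q x \<in> \<Gamma>)"

definition mech_IC :: "(real^'k \<Rightarrow> real^'k) \<Rightarrow> (real^'k \<Rightarrow> real) \<Rightarrow> bool" where
  "mech_IC q s = (\<forall>x\<in>nonneg_orthant. \<forall>y\<in>nonneg_orthant.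
      q x \<bullet> x - s x \<ge> q y \<bullet> x - s y)"

definition mech_IR :: "(real^'k \<Rightarrow> real^'k) \<Rightarrow> (real^'k \<Rightarrow> real) \<Rightarrow> bool" where
  "mech_IR q s = (\<forall>x\<in>nonneg_orthant. q x \<bullet> x - s x \<ge> 0)"

definition alloc_monotonic :: "(real^'k \<Rightarrow> real^'k) \<Rightarrow> bool" where
  "alloc_monotonic q = (\<forall>x\<in>nonneg_orthant. \<forall>y\<in>nonneg_orthant.
      (\<forall>i. x $ i \<le> y $ i) \<longrightarrow> (\<forall>i. q x $ i \<le> q y $ i))"

definition revenue :: "'a measure \<Rightarrow> ('a \<Rightarrow> real^'k) \<Rightarrow> (real^'k \<Rightarrow> real) \<Rightarrow> real" where
  "revenue M X s = (\<integral>\<omega>. s (X \<omega>) \<partial>M)"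

text \<open>Admissible mechanisms for AMonRev: allocation-monotonic, IC, IR Gamma-mechanisms
  whose payment s(X) is a random variable (so that E[s(X)] makes sense).\<close>
definition amon_mechanisms ::
  "(real^'k) set \<Rightarrow> 'a measure \<Rightarrow> ('a \<Rightarrow> real^'k) \<Rightarrow> ((real^'k \<Rightarrow> real^'k) \<times> (real^'k \<Rightarrow> real)) set" where
  "amon_mechanisms \<Gamma> M X = {(q, s). is_mechanism \<Gamma> q s \<and> mech_IC q s \<and> mech_IR q s
      \<and> alloc_monotonic q \<and> (\<lambda>\<omega>. s (X \<omega>)) \<in> borel_measurable M}"

definition AMonRev :: "(real^'k) set \<Rightarrow> 'a measure \<Rightarrow> ('a \<Rightarrow> real^'k) \<Rightarrow> ereal" where
  "AMonRev \<Gamma> M X = (SUP \<mu> \<in> amon_mechanisms \<Gamma> M X. ereal (revenue M X (snd \<mu>)))"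

end

theory Submission
  imports Defs
begin


lemma closed_orthant: "closed (nonneg_orthant :: (real^'k) set)"
proof -
  have "nonneg_orthant = (\<Inter>i. {x::real^'k. 0 \<le> x $ i})" unfolding nonneg_orthant_def by auto
  moreover have "closed {x::real^'k. 0 \<le> x $ i}" for i
    by (intro closed_Collect_le continuous_intros)
  ultimately show ?thesis by (metis closed_INT)
qed

lemma meas_comp_lip:
  fixes f :: "real^'k \<Rightarrow> real" and Y :: "'a \<Rightarrow> real^'k"
  assumes "L-lipschitz_on nonneg_orthant f" "Y \<in> borel_measurable M"
    "\<forall>\<omega>\<in>space M. Y \<omega> \<in> nonneg_orthant"
  shows "(\<lambda>\<omega>. f (Y \<omega>)) \<in> borel_measurable M"
proof -
  have c: "continuous_on nonneg_orthant f" using assms(1) by (rule lipschitz_on_continuous_on)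
  have "f \<in> borel_measurable (restrict_space borel nonneg_orthant)"
    by (rule borel_measurable_continuous_on_restrict[OF c])
  moreover have "Y \<in> measurable M (restrict_space borel nonneg_orthant)"
    using assms(2,3) by (intro measurable_restrict_space2) auto
  ultimately show ?thesis by (rule measurable_compose[rotated])
qed

lemma integrable_comp_lip:
  fixes f :: "real^'k \<Rightarrow> real" and Y :: "'a \<Rightarrow> real^'k"
  assumes "L-lipschitz_on nonneg_orthant f" "Y \<in> borel_measurable M"
    "\<forall>\<omega>\<in>space M. Y \<omega> \<in> nonneg_orthant" "integrable M (\<lambda>\<omega>. norm (Y \<omega>))"
    "\<forall>x\<in>nonneg_orthant. \<bar>f x\<bar> \<le> B * norm x"
  shows "integrable M (\<lambda>\<omega>. f (Y \<omega>))"
proof (rule Bochner_Integration.integrable_bound)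
  show "integrable M (\<lambda>\<omega>. B * norm (Y \<omega>))" using assms(4) by simp
  show "(\<lambda>\<omega>. f (Y \<omega>)) \<in> borel_measurable M" using meas_comp_lip[OF assms(1-3)] .
  show "AE \<omega> in M. norm (f (Y \<omega>)) \<le> norm (B * norm (Y \<omega>))"
    using assms(3,5) by (intro AE_I2) (smt (verit) real_norm_def)
qed

lemma tail_tendsto:
  fixes Y :: "'a \<Rightarrow> real^'k"
  assumes "Y \<in> borel_measurable M" "integrable M (\<lambda>\<omega>. norm (Y \<omega>))"
  shows "(\<lambda>m::nat. \<integral>\<omega>. (if norm (Y \<omega>) > real m then norm (Y \<omega>) else 0) \<partial>M) \<longlonglongrightarrow> 0"
proof -
  have "(\<lambda>m::nat. \<integral>\<omega>. (if norm (Y \<omega>) > real m then norm (Y \<omega>) else 0) \<partial>M) \<longlonglongrightarrow> (\<integral>\<omega>. 0 \<partial>M)"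
  proof (rule integral_dominated_convergence[where w="\<lambda>\<omega>. norm (Y \<omega>)"])
    show "(\<lambda>\<omega>. 0::real) \<in> borel_measurable M" by simp
    show "(\<lambda>\<omega>. if norm (Y \<omega>) > real m then norm (Y \<omega>) else 0) \<in> borel_measurable M" for m
      using assms(1) by measurable
    show "integrable M (\<lambda>\<omega>. norm (Y \<omega>))" by fact
    show "AE \<omega> in M. (\<lambda>m. if norm (Y \<omega>) > real m then norm (Y \<omega>) else 0) \<longlonglongrightarrow> 0"
    proof (rule AE_I2)
      fix \<omega>
      obtain N where N: "norm (Y \<omega>) < real N" using reals_Archimedean2 by blast
      have "eventually (\<lambda>m. (if norm (Y \<omega>) > real m then norm (Y \<omega>) else 0) = 0) sequentially"
        unfolding eventually_sequentially using N
        by (intro exI[of _ N]) auto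
      then show "(\<lambda>m. if norm (Y \<omega>) > real m then norm (Y \<omega>) else 0) \<longlonglongrightarrow> 0"
        by (rule tendsto_eventually)
    qed
    show "AE \<omega> in M. norm (if norm (Y \<omega>) > real m then norm (Y \<omega>) else 0) \<le> norm (Y \<omega>)" for m
      by (intro AE_I2) auto
  qed
  then show ?thesis by simp
qed

lemma lip_integral_tendsto:
  fixes v :: "'i \<Rightarrow> real^'k \<Rightarrow> real" and w :: "real^'k \<Rightarrow> real" and Y :: "'a \<Rightarrow> real^'k"
  assumes P: "prob_space M" and Ym: "Y \<in> borel_measurable M"
    and YO: "\<forall>\<omega>\<in>space M. Y \<omega> \<in> nonneg_orthant" and Yi: "integrable M (\<lambda>\<omega>. norm (Y \<omega>))"
    and vL: "\<And>n. B-lipschitz_on nonneg_orthant (v n)" and wL: "B-lipschitz_on nonneg_orthant w"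
    and vB: "\<And>n x. x \<in> nonneg_orthant \<Longrightarrow> \<bar>v n x\<bar> \<le> B * norm x"
    and wB: "\<And>x. x \<in> nonneg_orthant \<Longrightarrow> \<bar>w x\<bar> \<le> B * norm x"
    and lim: "\<And>x. x \<in> nonneg_orthant \<Longrightarrow> ((\<lambda>n. v n x) \<longlongrightarrow> w x) F"
  shows "((\<lambda>n. \<integral>\<omega>. v n (Y \<omega>) \<partial>M) \<longlongrightarrow> (\<integral>\<omega>. w (Y \<omega>) \<partial>M)) F"
proof (rule tendstoI)
  fix e :: real assume e: "e > 0"
  have B0: "B \<ge> 0" using wL by (rule lipschitz_on_nonneg)
  define tl where "tl = (\<lambda>m::nat. \<lambda>\<omega>. (if norm (Y \<omega>) > real m then norm (Y \<omega>) else 0))"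
  have tlm: "tl m \<in> borel_measurable M" for m unfolding tl_def using Ym by measurable
  have tli: "integrable M (tl m)" for m
  proof (rule Bochner_Integration.integrable_bound[OF Yi tlm])
    show "AE \<omega> in M. norm (tl m \<omega>) \<le> norm (norm (Y \<omega>))" by (intro AE_I2) (auto simp: tl_def)
  qed
  have "(\<lambda>m. integral\<^sup>L M (tl m)) \<longlonglongrightarrow> 0" unfolding tl_def by (rule tail_tendsto[OF Ym Yi])
  then have "eventually (\<lambda>m. integral\<^sup>L M (tl m) < e / (4 * (B + 1))) sequentially"
    using e B0 by (intro order_tendstoD(2)) auto
  then obtain R where R: "integral\<^sup>L M (tl R) < e / (4 * (B + 1))"
    unfolding eventually_sequentially by blast
  define K where "K = cball (0::real^'k) (real R) \<inter> nonneg_orthant"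
  have "compact K" unfolding K_def by (intro compact_Int_closed compact_cball closed_orthant)
  define r where "r = e / (4 * (2 * B + 1))"
  have r0: "r > 0" unfolding r_def using e B0 by auto
  have tb: "\<forall>\<epsilon>>0. \<exists>k. finite k \<and> k \<subseteq> K \<and> K \<subseteq> (\<Union>x\<in>k. ball x \<epsilon>)"
    by (rule seq_compact_imp_totally_bounded[OF compact_imp_seq_compact[OF \<open>compact K\<close>]])
  from tb[rule_format, OF r0] obtain C where C: "finite C" "C \<subseteq> K" "K \<subseteq> (\<Union>c\<in>C. ball c r)"
    by (elim exE conjE)
  have ev: "eventually (\<lambda>n. \<forall>c\<in>C. dist (v n c) (w c) < r) F"
    using C(1) 
  proof (rule eventually_ball_finite, intro ballI)
    fix c assume "c \<in> C"
    then have "c \<in> nonneg_orthant" using C(2) K_def by auto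
    then show "eventually (\<lambda>n. dist (v n c) (w c) < r) F" using lim r0 tendstoD by blast
  qed
  show "eventually (\<lambda>n. dist (\<integral>\<omega>. v n (Y \<omega>) \<partial>M) (\<integral>\<omega>. w (Y \<omega>) \<partial>M) < e) F"
    using ev
  proof (rule eventually_mono)
    fix n assume H: "\<forall>c\<in>C. dist (v n c) (w c) < r"
    have unif: "\<bar>v n x - w x\<bar> \<le> e / 4" if "x \<in> K" for x
    proof -
      obtain c where c: "c \<in> C" "dist c x < r" using C(3) \<open>x \<in> K\<close> by auto
      have xO: "x \<in> nonneg_orthant" and cO: "c \<in> nonneg_orthant" using that c C(2) K_def by auto
      have "\<bar>v n x - v n c\<bar> \<le> B * dist x c" using lipschitz_onD[OF vL xO cO] by (simp add: dist_real_def)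
      moreover have "\<bar>w c - w x\<bar> \<le> B * dist c x" using lipschitz_onD[OF wL cO xO] by (simp add: dist_real_def)
      moreover have "\<bar>v n c - w c\<bar> < r" using H c(1) by (simp add: dist_real_def)
      moreover have "B * dist x c \<le> B * r" "B * dist c x \<le> B * r"
        using c(2) B0 by (auto simp: dist_commute intro: mult_left_mono)
      ultimately have "\<bar>v n x - w x\<bar> \<le> (2 * B + 1) * r" by (simp add: algebra_simps)
      also have "\<dots> = e / 4" unfolding r_def using B0 by (simp add: field_simps)
      finally show ?thesis .
    qed
    have vi: "integrable M (\<lambda>\<omega>. v n (Y \<omega>))"
      using integrable_comp_lip[OF vL Ym YO Yi] vB by blast
    have wi: "integrable M (\<lambda>\<omega>. w (Y \<omega>))"
      using integrable_comp_lip[OF wL Ym YO Yi] wB by blast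
    have pt: "\<bar>v n (Y \<omega>) - w (Y \<omega>)\<bar> \<le> e / 4 + 2 * B * tl R \<omega>" if "\<omega> \<in> space M" for \<omega>
    proof (cases "norm (Y \<omega>) > real R")
      case True
      have "\<bar>v n (Y \<omega>) - w (Y \<omega>)\<bar> \<le> 2 * B * norm (Y \<omega>)"
        using vB[of "Y \<omega>" n] wB[of "Y \<omega>"] YO that by auto
      then show ?thesis using True e by (simp add: tl_def)
    next
      case False
      then have "Y \<omega> \<in> K" using YO that by (auto simp: K_def)
      then show ?thesis using unif[of "Y \<omega>"] B0 False by (simp add: tl_def)
    qed
    have "dist (\<integral>\<omega>. v n (Y \<omega>) \<partial>M) (\<integral>\<omega>. w (Y \<omega>) \<partial>M) = \<bar>\<integral>\<omega>. (v n (Y \<omega>) - w (Y \<omega>)) \<partial>M\<bar>"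
      using vi wi by (simp add: dist_real_def)
    also have "\<dots> \<le> (\<integral>\<omega>. (e / 4 + 2 * B * tl R \<omega>) \<partial>M)"
    proof -
      have "\<bar>\<integral>\<omega>. (v n (Y \<omega>) - w (Y \<omega>)) \<partial>M\<bar> \<le> (\<integral>\<omega>. \<bar>v n (Y \<omega>) - w (Y \<omega>)\<bar> \<partial>M)"
        using integral_norm_bound[of M "\<lambda>\<omega>. v n (Y \<omega>) - w (Y \<omega>)"] by simp
      also have "\<dots> \<le> (\<integral>\<omega>. (e / 4 + 2 * B * tl R \<omega>) \<partial>M)"
      proof (rule integral_mono)
        have FM: "finite_measure M" using P unfolding prob_space_def by simp
        show "integrable M (\<lambda>\<omega>. e / 4 + 2 * B * tl R \<omega>)"
          using finite_measure.integrable_const[OF FM] tli by (intro Bochner_Integration.integrable_add) auto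
        show "integrable M (\<lambda>\<omega>. \<bar>v n (Y \<omega>) - w (Y \<omega>)\<bar>)" using vi wi by auto
      qed (use pt in auto)
      finally show ?thesis .
    qed
    also have "\<dots> = e / 4 + 2 * B * integral\<^sup>L M (tl R)"
    proof -
      have FM: "finite_measure M" using P unfolding prob_space_def by simp
      have "(\<integral>\<omega>. (e / 4 + 2 * B * tl R \<omega>) \<partial>M) = (\<integral>\<omega>. e / 4 \<partial>M) + (\<integral>\<omega>. 2 * B * tl R \<omega> \<partial>M)"
        using finite_measure.integrable_const[OF FM] tli by (intro Bochner_Integration.integral_add) auto
      then show ?thesis using prob_space.prob_space[OF P] by simp
    qed
    also have "\<dots> < e"
    proof -
      have "2 * B * integral\<^sup>L M (tl R) \<le> 2 * B * (e / (4 * (B + 1)))"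
        using R B0 by (intro mult_left_mono) auto
      also have "\<dots> < e / 2 + e / 4" using B0 e by (simp add: field_simps) (smt (verit) mult_nonneg_nonneg)
      finally show ?thesis by simp
    qed
    finally show "dist (\<integral>\<omega>. v n (Y \<omega>) \<partial>M) (\<integral>\<omega>. w (Y \<omega>) \<partial>M) < e" .
  qed
qed



lemma zero_O: "(0::real^'k) \<in> nonneg_orthant" by (simp add: nonneg_orthant_def)

lemma scale_O: "c \<ge> 0 \<Longrightarrow> x \<in> nonneg_orthant \<Longrightarrow> c *\<^sub>R (x::real^'k) \<in> nonneg_orthant"
  by (simp add: nonneg_orthant_def)

lemma inner_O: "a \<in> nonneg_orthant \<Longrightarrow> b \<in> nonneg_orthant \<Longrightarrow> 0 \<le> (a::real^'k) \<bullet> b"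
  unfolding nonneg_orthant_def inner_vec_def by (auto intro: sum_nonneg)

lemma inner_B: "norm (a::real^'k) \<le> B \<Longrightarrow> \<bar>a \<bullet> b\<bar> \<le> B * norm b"
  by (meson Cauchy_Schwarz_ineq2 mult_right_mono norm_ge_zero order_trans)

lemma mech_props:
  fixes q :: "real^'k \<Rightarrow> real^'k" and u :: "real^'k \<Rightarrow> real"
  assumes GO: "\<Gamma> \<subseteq> nonneg_orthant" and GB: "\<forall>\<gamma>\<in>\<Gamma>. norm \<gamma> \<le> B" and B0: "B \<ge> 0"
    and qG: "\<forall>x\<in>nonneg_orthant. q x \<in> \<Gamma>"
    and sub: "\<forall>x\<in>nonneg_orthant. \<forall>y\<in>nonneg_orthant. u y + q y \<bullet> (x - y) \<le> u x"
    and u0: "u 0 = 0"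
  shows "\<forall>x\<in>nonneg_orthant. 0 \<le> u x" "\<forall>x\<in>nonneg_orthant. u x \<le> q x \<bullet> x"
    "\<forall>x\<in>nonneg_orthant. \<bar>u x\<bar> \<le> B * norm x" "B-lipschitz_on nonneg_orthant u"
proof -
  show P1: "\<forall>x\<in>nonneg_orthant. 0 \<le> u x"
  proof
    fix x :: "real^'k" assume x: "x \<in> nonneg_orthant"
    have "u 0 + q 0 \<bullet> (x - 0) \<le> u x" using sub x zero_O by blast
    moreover have "0 \<le> q 0 \<bullet> x" using qG GO zero_O x inner_O by blast
    ultimately show "0 \<le> u x" using u0 by simp
  qed
  show P2: "\<forall>x\<in>nonneg_orthant. u x \<le> q x \<bullet> x"
  proof
    fix x :: "real^'k" assume x: "x \<in> nonneg_orthant"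
    have "u x + q x \<bullet> (0 - x) \<le> u 0" using sub x zero_O by blast
    then show "u x \<le> q x \<bullet> x" using u0 by (simp add: inner_diff_right)
  qed
  show "\<forall>x\<in>nonneg_orthant. \<bar>u x\<bar> \<le> B * norm x"
  proof
    fix x :: "real^'k" assume x: "x \<in> nonneg_orthant"
    have "\<bar>q x \<bullet> x\<bar> \<le> B * norm x" using inner_B GB qG x by blast
    then show "\<bar>u x\<bar> \<le> B * norm x" using P1 P2 x by auto
  qed
  show "B-lipschitz_on nonneg_orthant u"
  proof (rule lipschitz_onI)
    fix x y :: "real^'k" assume x: "x \<in> nonneg_orthant" and y: "y \<in> nonneg_orthant"
    have a: "u y + q y \<bullet> (x - y) \<le> u x" "u x + q x \<bullet> (y - x) \<le> u y" using sub x y by auto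
    have b: "\<bar>q y \<bullet> (x - y)\<bar> \<le> B * norm (x - y)" "\<bar>q x \<bullet> (y - x)\<bar> \<le> B * norm (y - x)"
      using inner_B GB qG x y by blast+
    have "norm (y - x) = norm (x - y)" by (rule norm_minus_commute)
    then show "dist (u x) (u y) \<le> B * dist x y" using a b by (simp add: dist_real_def dist_norm)
  qed (fact B0)
qed

lemma adm_props:
  fixes q :: "real^'k \<Rightarrow> real^'k" and s :: "real^'k \<Rightarrow> real"
  assumes adm: "(q, s) \<in> amon_mechanisms \<Gamma> M X"
    and GO: "\<Gamma> \<subseteq> nonneg_orthant" and GB: "\<forall>\<gamma>\<in>\<Gamma>. norm \<gamma> \<le> B" and B0: "B \<ge> 0"
    and P: "prob_space M" and XO: "\<forall>\<omega>\<in>space M. X \<omega> \<in> nonneg_orthant"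
    and Xi: "integrable M (\<lambda>\<omega>. norm (X \<omega>))"
  shows "\<forall>x\<in>nonneg_orthant. s 0 \<le> s x \<and> s x \<le> B * norm x" "s 0 \<le> 0"
    "integrable M (\<lambda>\<omega>. s (X \<omega>))" "revenue M X s \<le> B * (\<integral>\<omega>. norm (X \<omega>) \<partial>M)"
proof -
  have qG: "\<forall>x\<in>nonneg_orthant. q x \<in> \<Gamma>" and IC: "mech_IC q s" and IR: "mech_IR q s"
    and sm: "(\<lambda>\<omega>. s (X \<omega>)) \<in> borel_measurable M"
    using adm by (auto simp: amon_mechanisms_def is_mechanism_def)
  show bnd: "\<forall>x\<in>nonneg_orthant. s 0 \<le> s x \<and> s x \<le> B * norm x"
  proof
    fix x :: "real^'k" assume x: "x \<in> nonneg_orthant"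
    have "q 0 \<bullet> 0 - s 0 \<ge> q x \<bullet> 0 - s x" using IC x zero_O unfolding mech_IC_def by blast
    moreover have "q x \<bullet> x - s x \<ge> 0" using IR x unfolding mech_IR_def by blast
    moreover have "\<bar>q x \<bullet> x\<bar> \<le> B * norm x" using inner_B GB qG x by blast
    ultimately show "s 0 \<le> s x \<and> s x \<le> B * norm x" by auto
  qed
  show s0: "s 0 \<le> 0" using bnd zero_O by fastforce
  have FM: "finite_measure M" using P unfolding prob_space_def by simp
  show si: "integrable M (\<lambda>\<omega>. s (X \<omega>))"
  proof (rule Bochner_Integration.integrable_bound)
    show "integrable M (\<lambda>\<omega>. \<bar>s 0\<bar> + B * norm (X \<omega>))"
      using finite_measure.integrable_const[OF FM] Xi by (intro Bochner_Integration.integrable_add) auto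
    show "AE \<omega> in M. norm (s (X \<omega>)) \<le> norm (\<bar>s 0\<bar> + B * norm (X \<omega>))"
    proof (rule AE_I2)
      fix \<omega> assume "\<omega> \<in> space M"
      then have "s 0 \<le> s (X \<omega>) \<and> s (X \<omega>) \<le> B * norm (X \<omega>)" using bnd XO by blast
      then have "s 0 \<le> s (X \<omega>) \<and> s (X \<omega>) \<le> B * norm (X \<omega>)" .
      show "norm (s (X \<omega>)) \<le> norm (\<bar>s 0\<bar> + B * norm (X \<omega>))"
      proof -
        have "0 \<le> B * norm (X \<omega>)" using B0 by simp
        then show ?thesis using s0 \<open>s 0 \<le> s (X \<omega>) \<and> s (X \<omega>) \<le> B * norm (X \<omega>)\<close>
          unfolding real_norm_def by (simp add: abs_le_iff)
      qed
    qed
  qed (fact sm)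
  show "revenue M X s \<le> B * (\<integral>\<omega>. norm (X \<omega>) \<partial>M)"
  proof -
    have "revenue M X s \<le> (\<integral>\<omega>. B * norm (X \<omega>) \<partial>M)"
      unfolding revenue_def using si Xi bnd XO by (intro integral_mono) auto
    then show ?thesis by simp
  qed
qed



lemma scale_O': "c \<ge> 0 \<Longrightarrow> x \<in> nonneg_orthant \<Longrightarrow> c *\<^sub>R (x::real^'k) \<in> nonneg_orthant"
  by (simp add: nonneg_orthant_def)

lemma Q_construction:
  fixes q :: "real^'k \<Rightarrow> real^'k" and u :: "real^'k \<Rightarrow> real"
  assumes GC: "closed \<Gamma>" and GO: "\<Gamma> \<subseteq> nonneg_orthant"
    and qG: "\<forall>x\<in>nonneg_orthant. q x \<in> \<Gamma>"
    and sub: "\<forall>x\<in>nonneg_orthant. \<forall>y\<in>nonneg_orthant. u y + q y \<bullet> (x - y) \<le> u x"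
    and mono: "\<forall>x\<in>nonneg_orthant. \<forall>y\<in>nonneg_orthant. (\<forall>i. x $ i \<le> y $ i) \<longrightarrow> (\<forall>i. q x $ i \<le> q y $ i)"
    and lip: "B-lipschitz_on nonneg_orthant u"
  obtains Q where "\<forall>x\<in>nonneg_orthant. Q x \<in> \<Gamma>"
    "\<forall>x\<in>nonneg_orthant. \<forall>z\<in>nonneg_orthant. u x + Q x \<bullet> (z - x) \<le> u z"
    "\<forall>x\<in>nonneg_orthant. \<forall>y\<in>nonneg_orthant. (\<forall>i. x $ i \<le> y $ i) \<longrightarrow> (\<forall>i. Q x $ i \<le> Q y $ i)"
    "\<forall>x\<in>nonneg_orthant. (\<lambda>m. (u ((1 + 1 / real (Suc m)) *\<^sub>R x) - u x) * real (Suc m)) \<longlonglongrightarrow> Q x \<bullet> x"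
proof -
  define tt where "tt = (\<lambda>m::nat. 1 / real (Suc m))"
  define pt where "pt = (\<lambda>m::nat. \<lambda>x::real^'k. (1 + tt m) *\<^sub>R x)"
  have tt0: "tt m > 0" for m unfolding tt_def by simp
  have ptO: "x \<in> nonneg_orthant \<Longrightarrow> pt m x \<in> nonneg_orthant" for m x
    unfolding pt_def using tt0[of m] by (intro scale_O') auto
  have ttlim: "tt \<longlonglongrightarrow> 0" unfolding tt_def using LIMSEQ_inverse_real_of_nat by (simp add: inverse_eq_divide)
  have ptlim: "(\<lambda>m. pt m x) \<longlonglongrightarrow> x" for x
  proof -
    have "(\<lambda>m. (1 + tt m) *\<^sub>R x) \<longlonglongrightarrow> (1 + 0) *\<^sub>R x"
      by (intro tendsto_intros ttlim)
    then show ?thesis unfolding pt_def by simp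
  qed
  have ptle: "(pt (Suc m) x) $ j \<le> (pt m x) $ j" if "x \<in> nonneg_orthant" for m x j
  proof -
    have "tt (Suc m) \<le> tt m" unfolding tt_def by (simp add: frac_le)
    moreover have "0 \<le> x $ j" using that by (simp add: nonneg_orthant_def)
    ultimately show ?thesis unfolding pt_def by (simp add: mult_right_mono)
  qed
  have conv: "(\<lambda>m. q (pt m x) $ i) \<longlonglongrightarrow> lim (\<lambda>m. q (pt m x) $ i)" if x: "x \<in> nonneg_orthant" for x i
  proof -
    have "decseq (\<lambda>m. q (pt m x) $ i)"
    proof (rule decseq_SucI)
      fix m show "q (pt (Suc m) x) $ i \<le> q (pt m x) $ i"
        using mono ptO[OF x] ptle[OF x] by blast
    qed
    moreover have "0 \<le> q (pt m x) $ i" for m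
    proof -
      have "q (pt m x) \<in> nonneg_orthant" using qG ptO[OF x] GO by blast
      then show ?thesis by (simp add: nonneg_orthant_def)
    qed
    ultimately obtain L where "(\<lambda>m. q (pt m x) $ i) \<longlonglongrightarrow> L"
      using decseq_convergent by blast
    then show ?thesis using limI by metis
  qed
  define Q where "Q = (\<lambda>x. \<chi> i. lim (\<lambda>m. q (pt m x) $ i))"
  have Qlim: "(\<lambda>m. q (pt m x)) \<longlonglongrightarrow> Q x" if "x \<in> nonneg_orthant" for x
    unfolding Q_def by (rule vec_tendstoI) (simp add: conv[OF that])
  have QG: "\<forall>x\<in>nonneg_orthant. Q x \<in> \<Gamma>"
  proof
    fix x :: "real^'k" assume x: "x \<in> nonneg_orthant"
    show "Q x \<in> \<Gamma>" by (rule Lim_in_closed_set[OF GC _ _ Qlim[OF x]]) (use qG ptO[OF x] in auto)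
  qed
  have Qmono: "\<forall>x\<in>nonneg_orthant. \<forall>y\<in>nonneg_orthant. (\<forall>i. x $ i \<le> y $ i) \<longrightarrow> (\<forall>i. Q x $ i \<le> Q y $ i)"
  proof (intro ballI impI allI)
    fix x y :: "real^'k" and i assume x: "x \<in> nonneg_orthant" and y: "y \<in> nonneg_orthant"
      and le: "\<forall>i. x $ i \<le> y $ i"
    have "\<forall>j. pt m x $ j \<le> pt m y $ j" for m
      using le tt0[of m] unfolding pt_def by (simp add: mult_left_mono)
    then have "q (pt m x) $ i \<le> q (pt m y) $ i" for m using mono ptO x y by blast
    then show "Q x $ i \<le> Q y $ i"
      by (intro LIMSEQ_le[OF tendsto_vec_nth[OF Qlim[OF x]] tendsto_vec_nth[OF Qlim[OF y]]]) auto
  qed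
  have ucont: "continuous_on nonneg_orthant u" using lip by (rule lipschitz_on_continuous_on)
  have ulim: "(\<lambda>m. u (pt m x)) \<longlonglongrightarrow> u x" if "x \<in> nonneg_orthant" for x
    using continuous_on_tendsto_compose[OF ucont ptlim that] ptO[OF that] by (simp add: o_def)
  have Qsub: "\<forall>x\<in>nonneg_orthant. \<forall>z\<in>nonneg_orthant. u x + Q x \<bullet> (z - x) \<le> u z"
  proof (intro ballI)
    fix x z :: "real^'k" assume x: "x \<in> nonneg_orthant" and z: "z \<in> nonneg_orthant"
    have "(\<lambda>m. u (pt m x) + q (pt m x) \<bullet> (z - pt m x)) \<longlonglongrightarrow> u x + Q x \<bullet> (z - x)"
      by (intro tendsto_intros ulim x Qlim ptlim)
    moreover have "u (pt m x) + q (pt m x) \<bullet> (z - pt m x) \<le> u z" for m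
      using sub ptO[OF x] z by blast
    ultimately show "u x + Q x \<bullet> (z - x) \<le> u z"
      by (intro LIMSEQ_le[OF _ tendsto_const]) auto
  qed
  have quot: "\<forall>x\<in>nonneg_orthant. (\<lambda>m. (u ((1 + 1 / real (Suc m)) *\<^sub>R x) - u x) * real (Suc m)) \<longlonglongrightarrow> Q x \<bullet> x"
  proof
    fix x :: "real^'k" assume x: "x \<in> nonneg_orthant"
    have e1: "pt m x - x = tt m *\<^sub>R x" for m unfolding pt_def by (simp add: algebra_simps)
    have e2: "tt m * real (Suc m) = 1" for m unfolding tt_def by simp
    have lo: "Q x \<bullet> x \<le> (u (pt m x) - u x) * real (Suc m)" for m
    proof -
      have "u x + Q x \<bullet> (pt m x - x) \<le> u (pt m x)" using Qsub x ptO[OF x] by blast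
      then have "tt m * (Q x \<bullet> x) \<le> u (pt m x) - u x" by (simp add: e1)
      then have "tt m * (Q x \<bullet> x) * real (Suc m) \<le> (u (pt m x) - u x) * real (Suc m)"
        by (intro mult_right_mono) auto
      moreover have "tt m * (Q x \<bullet> x) * real (Suc m) = (Q x \<bullet> x) * (tt m * real (Suc m))"
        by (simp only: mult_ac)
      moreover have "(Q x \<bullet> x) * (tt m * real (Suc m)) = Q x \<bullet> x" by (simp only: e2 mult_1_right)
      ultimately show ?thesis by linarith
    qed
    have hi: "(u (pt m x) - u x) * real (Suc m) \<le> q (pt m x) \<bullet> x" for m
    proof -
      have "u (pt m x) + q (pt m x) \<bullet> (x - pt m x) \<le> u x" using sub ptO[OF x] x by blast
      moreover have "x - pt m x = - (tt m *\<^sub>R x)" using e1[of m] by (simp add: algebra_simps)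
      ultimately have "u (pt m x) - u x \<le> tt m * (q (pt m x) \<bullet> x)" by simp
      then have "(u (pt m x) - u x) * real (Suc m) \<le> tt m * (q (pt m x) \<bullet> x) * real (Suc m)"
        by (intro mult_right_mono) auto
      moreover have "tt m * (q (pt m x) \<bullet> x) * real (Suc m) = (q (pt m x) \<bullet> x) * (tt m * real (Suc m))"
        by (simp only: mult_ac)
      moreover have "(q (pt m x) \<bullet> x) * (tt m * real (Suc m)) = q (pt m x) \<bullet> x" by (simp only: e2 mult_1_right)
      ultimately show ?thesis by linarith
    qed
    have H: "(\<lambda>m. q (pt m x) \<bullet> x) \<longlonglongrightarrow> Q x \<bullet> x" by (intro tendsto_intros Qlim x)
    have L1: "\<forall>m. Q x \<bullet> x \<le> (u (pt m x) - u x) * real (Suc m)" using lo by blast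
    have L2: "\<forall>m. (u (pt m x) - u x) * real (Suc m) \<le> q (pt m x) \<bullet> x" using hi by blast
    have "(\<lambda>m. (u (pt m x) - u x) * real (Suc m)) \<longlonglongrightarrow> Q x \<bullet> x"
      by (rule tendsto_sandwich[OF always_eventually[OF L1] always_eventually[OF L2] tendsto_const H])
    then show "(\<lambda>m. (u ((1 + 1 / real (Suc m)) *\<^sub>R x) - u x) * real (Suc m)) \<longlonglongrightarrow> Q x \<bullet> x"
      unfolding pt_def tt_def .
  qed
  show ?thesis using that QG Qsub Qmono quot by blast
qed



lemma cluster_filter:
  fixes f :: "nat \<Rightarrow> 'b::topological_space"
  assumes "compact K" "\<And>n. f n \<in> K"
  obtains g F where "g \<in> K" "F \<noteq> bot" "F \<le> sequentially" "(f \<longlongrightarrow> g) F"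
proof -
  have "filtermap f sequentially \<noteq> bot" by (simp add: filtermap_bot_iff)
  moreover have "eventually (\<lambda>x. x \<in> K) (filtermap f sequentially)"
    using assms(2) by (simp add: eventually_filtermap)
  ultimately obtain g where g: "g \<in> K" "inf (nhds g) (filtermap f sequentially) \<noteq> bot"
    using assms(1) unfolding compact_filter by blast
  define F where "F = inf (filtercomap f (nhds g)) sequentially"
  have "F \<noteq> bot"
  proof
    assume "F = bot"
    then have "eventually (\<lambda>_. False) F" by simp
    then obtain P Q where PQ: "eventually P (filtercomap f (nhds g))" "eventually Q sequentially"
      "\<And>x. P x \<Longrightarrow> Q x \<Longrightarrow> False"
      unfolding F_def eventually_inf by blast
    from PQ(1) obtain P' where P': "eventually P' (nhds g)" "\<And>x. P' (f x) \<Longrightarrow> P x"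
      unfolding eventually_filtercomap by blast
    have "eventually (\<lambda>y. \<not> P' y) (filtermap f sequentially)"
      unfolding eventually_filtermap using PQ(2) by (rule eventually_mono) (use PQ(3) P'(2) in blast)
    then have "eventually (\<lambda>_. False) (inf (nhds g) (filtermap f sequentially))"
      using P'(1) unfolding eventually_inf by blast
    then show False using g(2) by (simp add: eventually_False)
  qed
  moreover have "F \<le> sequentially" unfolding F_def by simp
  moreover have "(f \<longlongrightarrow> g) F" unfolding filterlim_iff_le_filtercomap F_def by simp
  ultimately show ?thesis using that g(1) by blast
qed

theorem theorem3:
  fixes \<Gamma> :: "(real^'k) set"
    and M :: "'a measure"
    and X :: "'a \<Rightarrow> real^'k"
  assumes "\<Gamma> \<noteq> {}" and "compact \<Gamma>" and "\<Gamma> \<subseteq> nonneg_orthant"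
    and "prob_space M"
    and "X \<in> borel_measurable M"
    and "\<forall>\<omega>\<in>space M. X \<omega> \<in> nonneg_orthant"
    and "integrable M (\<lambda>\<omega>. norm (X \<omega>))"
  shows "\<exists>q s. (q, s) \<in> amon_mechanisms \<Gamma> M X
           \<and> ereal (revenue M X s) = AMonRev \<Gamma> M X"
proof -
  note Gne = assms(1) and Gc = assms(2) and GO = assms(3) and P = assms(4)
    and Xm = assms(5) and XO = assms(6) and Xi = assms(7)
  have FM: "finite_measure M" using P unfolding prob_space_def by simp
  obtain B where B0': "B > 0" and GB: "\<forall>\<gamma>\<in>\<Gamma>. norm \<gamma> \<le> B"
    using compact_imp_bounded[OF Gc] unfolding bounded_pos by blast
  have B0: "B \<ge> 0" using B0' by simp
  obtain \<gamma>0 where g0: "\<gamma>0 \<in> \<Gamma>" using Gne by blast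
  define SET where "SET = amon_mechanisms \<Gamma> M X"
  have adm0: "((\<lambda>_. \<gamma>0), (\<lambda>_. 0::real)) \<in> SET"
    unfolding SET_def amon_mechanisms_def is_mechanism_def mech_IC_def mech_IR_def alloc_monotonic_def
    using g0 GO inner_O by auto
  have AM_le: "AMonRev \<Gamma> M X \<le> ereal (B * (\<integral>\<omega>. norm (X \<omega>) \<partial>M))"
    unfolding AMonRev_def
  proof (rule SUP_least)
    fix \<mu> assume "\<mu> \<in> amon_mechanisms \<Gamma> M X"
    then have "(fst \<mu>, snd \<mu>) \<in> amon_mechanisms \<Gamma> M X" by simp
    from adm_props(4)[OF this GO GB B0 P XO Xi]
    show "ereal (revenue M X (snd \<mu>)) \<le> ereal (B * (\<integral>\<omega>. norm (X \<omega>) \<partial>M))" by simp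
  qed
  have AM_ge: "ereal 0 \<le> AMonRev \<Gamma> M X"
    unfolding AMonRev_def using adm0 unfolding SET_def
    by (rule SUP_upper2) (simp add: revenue_def)
  define A where "A = real_of_ereal (AMonRev \<Gamma> M X)"
  have AM: "AMonRev \<Gamma> M X = ereal A"
    unfolding A_def using AM_le AM_ge by (cases "AMonRev \<Gamma> M X") auto
  have "\<forall>n::nat. \<exists>\<mu>\<in>SET. A - 1 / real (Suc n) < revenue M X (snd \<mu>)"
  proof
    fix n :: nat
    have "ereal (A - 1 / real (Suc n)) < AMonRev \<Gamma> M X" using AM by simp
    then show "\<exists>\<mu>\<in>SET. A - 1 / real (Suc n) < revenue M X (snd \<mu>)"
      unfolding AMonRev_def SET_def less_SUP_iff by simp
  qed
  then obtain mu where mu: "\<And>n. mu n \<in> SET" "\<And>n. A - 1 / real (Suc n) < revenue M X (snd (mu n))"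
    by metis
  define qn where "qn = (\<lambda>n. fst (mu n))"
  define sn where "sn = (\<lambda>n. snd (mu n))"
  have admn: "(qn n, sn n) \<in> amon_mechanisms \<Gamma> M X" for n
    using mu(1)[of n] unfolding qn_def sn_def SET_def by simp
  have qnG: "\<forall>x\<in>nonneg_orthant. qn n x \<in> \<Gamma>" for n
    using admn[of n] by (simp add: amon_mechanisms_def is_mechanism_def)
  have qnIC: "mech_IC (qn n) (sn n)" for n using admn[of n] by (simp add: amon_mechanisms_def)
  have qnmono: "alloc_monotonic (qn n)" for n using admn[of n] by (simp add: amon_mechanisms_def)
  define un where "un = (\<lambda>n x. qn n x \<bullet> x - sn n x + sn n 0)"
  have subn: "\<forall>x\<in>nonneg_orthant. \<forall>y\<in>nonneg_orthant. un n y + qn n y \<bullet> (x - y) \<le> un n x" for n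
  proof (intro ballI)
    fix x y :: "real^'k" assume x: "x \<in> nonneg_orthant" and y: "y \<in> nonneg_orthant"
    have "qn n x \<bullet> x - sn n x \<ge> qn n y \<bullet> x - sn n y" using qnIC[of n] x y unfolding mech_IC_def by blast
    then show "un n y + qn n y \<bullet> (x - y) \<le> un n x" unfolding un_def by (simp add: inner_diff_right)
  qed
  have un0: "un n 0 = 0" for n unfolding un_def by simp
  note mpn = mech_props[OF GO GB B0 qnG subn un0]
  define Kx where "Kx = (\<lambda>x::real^'k. if x \<in> nonneg_orthant then \<Gamma> \<times> {0..B * norm x} else {(\<gamma>0, 0::real)})"
  define K where "K = Pi\<^sub>E UNIV Kx"
  have "compactin (product_topology (\<lambda>_. euclidean) UNIV) K"
    unfolding K_def
    by (subst compactin_PiE) (auto simp: Kx_def intro: compact_Times Gc)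
  then have Kc: "compact K" by (simp add: euclidean_product_topology)
  define f where "f = (\<lambda>n x. if x \<in> nonneg_orthant then (qn n x, un n x) else (\<gamma>0, 0))"
  have fK: "f n \<in> K" for n
    unfolding K_def PiE_UNIV_domain
  proof (rule Pi_I)
    fix x :: "real^'k"
    show "f n x \<in> Kx x"
    proof (cases "x \<in> nonneg_orthant")
      case True
      have "qn n x \<in> \<Gamma>" "0 \<le> un n x" "\<bar>un n x\<bar> \<le> B * norm x"
        using qnG[of n] mpn(1)[of n] mpn(3)[of n] True by blast+
      then show ?thesis using True unfolding f_def Kx_def by simp
    next
      case False
      then show ?thesis unfolding f_def Kx_def by simp
    qed
  qed
  obtain g F where gK: "g \<in> K" and Fnb: "F \<noteq> bot" and Fseq: "F \<le> sequentially" and fg: "(f \<longlongrightarrow> g) F"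
    by (rule cluster_filter[OF Kc fK])
  have fgx: "((\<lambda>n. f n x) \<longlongrightarrow> g x) F" for x
  proof -
    have "continuous_on UNIV (\<lambda>h::real^'k \<Rightarrow> (real^'k) \<times> real. h x)" by simp
    from continuous_on_tendsto_compose[OF this fg] show ?thesis by (simp add: o_def)
  qed
  define q where "q = (\<lambda>x. fst (g x))"
  define u where "u = (\<lambda>x. snd (g x))"
  have qlim: "((\<lambda>n. qn n x) \<longlongrightarrow> q x) F" if "x \<in> nonneg_orthant" for x
    using tendsto_fst[OF fgx[of x]] that unfolding q_def f_def by simp
  have ulim: "((\<lambda>n. un n x) \<longlongrightarrow> u x) F" if "x \<in> nonneg_orthant" for x
    using tendsto_snd[OF fgx[of x]] that unfolding u_def f_def by simp
  have qG: "\<forall>x\<in>nonneg_orthant. q x \<in> \<Gamma>"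
  proof
    fix x :: "real^'k" assume x: "x \<in> nonneg_orthant"
    show "q x \<in> \<Gamma>"
      by (rule Lim_in_closed_set[OF compact_imp_closed[OF Gc] _ Fnb qlim[OF x]]) (use qnG x in auto)
  qed
  have sub: "\<forall>x\<in>nonneg_orthant. \<forall>y\<in>nonneg_orthant. u y + q y \<bullet> (x - y) \<le> u x"
  proof (intro ballI)
    fix x y :: "real^'k" assume x: "x \<in> nonneg_orthant" and y: "y \<in> nonneg_orthant"
    have "((\<lambda>n. un n y + qn n y \<bullet> (x - y)) \<longlongrightarrow> u y + q y \<bullet> (x - y)) F"
      by (intro tendsto_intros ulim qlim y)
    from tendsto_le[OF Fnb ulim[OF x] this] show "u y + q y \<bullet> (x - y) \<le> u x"
      using subn x y by auto
  qed
  have qmono: "\<forall>x\<in>nonneg_orthant. \<forall>y\<in>nonneg_orthant. (\<forall>i. x $ i \<le> y $ i) \<longrightarrow> (\<forall>i. q x $ i \<le> q y $ i)"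
  proof (intro ballI impI allI)
    fix x y :: "real^'k" and i assume x: "x \<in> nonneg_orthant" and y: "y \<in> nonneg_orthant"
      and le: "\<forall>i. x $ i \<le> y $ i"
    have "qn n x $ i \<le> qn n y $ i" for n using qnmono[of n] x y le unfolding alloc_monotonic_def by blast
    then show "q x $ i \<le> q y $ i"
      using tendsto_le[OF Fnb tendsto_vec_nth[OF qlim[OF y]] tendsto_vec_nth[OF qlim[OF x]]] by auto
  qed
  have u0: "u 0 = 0"
    using tendsto_unique[OF Fnb ulim[OF zero_O]] un0 by simp
  note mp = mech_props[OF GO GB B0 qG sub u0]
  obtain Q where QG: "\<forall>x\<in>nonneg_orthant. Q x \<in> \<Gamma>"
    and Qsub: "\<forall>x\<in>nonneg_orthant. \<forall>z\<in>nonneg_orthant. u x + Q x \<bullet> (z - x) \<le> u z"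
    and Qmono: "\<forall>x\<in>nonneg_orthant. \<forall>y\<in>nonneg_orthant. (\<forall>i. x $ i \<le> y $ i) \<longrightarrow> (\<forall>i. Q x $ i \<le> Q y $ i)"
    and Qquot: "\<forall>x\<in>nonneg_orthant. (\<lambda>m. (u ((1 + 1 / real (Suc m)) *\<^sub>R x) - u x) * real (Suc m)) \<longlonglongrightarrow> Q x \<bullet> x"
    using Q_construction[OF compact_imp_closed[OF Gc] GO qG sub qmono mp(4)] by blast
  define S where "S = (\<lambda>x. Q x \<bullet> x - u x)"
  define tt where "tt = (\<lambda>m::nat. 1 / real (Suc m))"
  have tt0: "tt m > 0" for m unfolding tt_def by simp
  have e2: "tt m * real (Suc m) = 1" for m unfolding tt_def by simp
  define Xs where "Xs = (\<lambda>m \<omega>. (1 + tt m) *\<^sub>R X \<omega>)"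
  have XsO: "\<forall>\<omega>\<in>space M. Xs m \<omega> \<in> nonneg_orthant" for m
    unfolding Xs_def using XO tt0[of m] by (auto intro: scale_O)
  have Xsm: "Xs m \<in> borel_measurable M" for m unfolding Xs_def using Xm by measurable
  have Xsi: "integrable M (\<lambda>\<omega>. norm (Xs m \<omega>))" for m
  proof -
    have "integrable M (\<lambda>\<omega>. \<bar>1 + tt m\<bar> * norm (X \<omega>))" using Xi by simp
    then show ?thesis unfolding Xs_def by simp
  qed
  have iunX: "integrable M (\<lambda>\<omega>. un n (X \<omega>))" for n
    using integrable_comp_lip[OF mpn(4) Xm XO Xi] mpn(3) by blast
  have iunXs: "integrable M (\<lambda>\<omega>. un n (Xs m \<omega>))" for n m
    using integrable_comp_lip[OF mpn(4) Xsm XsO Xsi] mpn(3) by blast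
  have iuX: "integrable M (\<lambda>\<omega>. u (X \<omega>))"
    using integrable_comp_lip[OF mp(4) Xm XO Xi] mp(3) by blast
  have iuXs: "integrable M (\<lambda>\<omega>. u (Xs m \<omega>))" for m
    using integrable_comp_lip[OF mp(4) Xsm XsO Xsi] mp(3) by blast
  have limX: "((\<lambda>n. \<integral>\<omega>. un n (X \<omega>) \<partial>M) \<longlongrightarrow> (\<integral>\<omega>. u (X \<omega>) \<partial>M)) F"
    by (rule lip_integral_tendsto[OF P Xm XO Xi mpn(4) mp(4)]) (use mpn(3) mp(3) ulim in auto)
  have limXs: "((\<lambda>n. \<integral>\<omega>. un n (Xs m \<omega>) \<partial>M) \<longlongrightarrow> (\<integral>\<omega>. u (Xs m \<omega>) \<partial>M)) F" for m
    by (rule lip_integral_tendsto[OF P Xsm XsO Xsi mpn(4) mp(4)]) (use mpn(3) mp(3) ulim in auto)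
  have key_n: "A - 1 / real (Suc n) \<le> ((\<integral>\<omega>. un n (Xs m \<omega>) \<partial>M) - (\<integral>\<omega>. un n (X \<omega>) \<partial>M)) * real (Suc m)
      - (\<integral>\<omega>. un n (X \<omega>) \<partial>M)" for n m
  proof -
    note ap = adm_props[OF admn[of n] GO GB B0 P XO Xi]
    have pw: "sn n x \<le> (un n ((1 + tt m) *\<^sub>R x) - un n x) * real (Suc m) - un n x"
      if x: "x \<in> nonneg_orthant" for x
    proof -
      have x': "(1 + tt m) *\<^sub>R x \<in> nonneg_orthant" using x tt0[of m] by (intro scale_O) auto
      have "un n x + qn n x \<bullet> ((1 + tt m) *\<^sub>R x - x) \<le> un n ((1 + tt m) *\<^sub>R x)"
        using subn[of n] x x' by blast
      moreover have "(1 + tt m) *\<^sub>R x - x = tt m *\<^sub>R x" by (simp add: algebra_simps)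
      ultimately have "tt m * (qn n x \<bullet> x) \<le> un n ((1 + tt m) *\<^sub>R x) - un n x" by simp
      then have "tt m * (qn n x \<bullet> x) * real (Suc m) \<le> (un n ((1 + tt m) *\<^sub>R x) - un n x) * real (Suc m)"
        by (intro mult_right_mono) auto
      moreover have "tt m * (qn n x \<bullet> x) * real (Suc m) = (qn n x \<bullet> x) * (tt m * real (Suc m))"
        by (simp only: mult_ac)
      moreover have "(qn n x \<bullet> x) * (tt m * real (Suc m)) = qn n x \<bullet> x" by (simp only: e2 mult_1_right)
      moreover have "sn n 0 \<le> 0" by (rule ap(2))
      moreover have "un n x = qn n x \<bullet> x - sn n x + sn n 0" unfolding un_def ..
      ultimately show ?thesis by linarith
    qed
    have "A - 1 / real (Suc n) < revenue M X (sn n)" using mu(2)[of n] unfolding sn_def .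
    also have "revenue M X (sn n) \<le> (\<integral>\<omega>. ((un n (Xs m \<omega>) - un n (X \<omega>)) * real (Suc m) - un n (X \<omega>)) \<partial>M)"
      unfolding revenue_def
    proof (rule integral_mono)
      show "integrable M (\<lambda>\<omega>. sn n (X \<omega>))" by (rule ap(3))
      show "integrable M (\<lambda>\<omega>. (un n (Xs m \<omega>) - un n (X \<omega>)) * real (Suc m) - un n (X \<omega>))"
        using iunX iunXs by auto
      show "sn n (X \<omega>) \<le> (un n (Xs m \<omega>) - un n (X \<omega>)) * real (Suc m) - un n (X \<omega>)"
        if "\<omega> \<in> space M" for \<omega>
        using pw[of "X \<omega>"] XO that unfolding Xs_def by blast
    qed
    also have "\<dots> = ((\<integral>\<omega>. un n (Xs m \<omega>) \<partial>M) - (\<integral>\<omega>. un n (X \<omega>) \<partial>M)) * real (Suc m)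
      - (\<integral>\<omega>. un n (X \<omega>) \<partial>M)"
      using iunX iunXs by (simp add: Bochner_Integration.integral_diff)
    finally show ?thesis by simp
  qed
  have key: "A \<le> ((\<integral>\<omega>. u (Xs m \<omega>) \<partial>M) - (\<integral>\<omega>. u (X \<omega>) \<partial>M)) * real (Suc m) - (\<integral>\<omega>. u (X \<omega>) \<partial>M)" for m
  proof -
    have l1: "((\<lambda>n. A - 1 / real (Suc n)) \<longlongrightarrow> A) F"
    proof (rule tendsto_mono[OF Fseq])
      have "(\<lambda>n. A - inverse (real (Suc n))) \<longlonglongrightarrow> A - 0"
        by (intro tendsto_intros LIMSEQ_inverse_real_of_nat)
      then show "(\<lambda>n. A - 1 / real (Suc n)) \<longlonglongrightarrow> A" by (simp add: inverse_eq_divide)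
    qed
    have l2: "((\<lambda>n. ((\<integral>\<omega>. un n (Xs m \<omega>) \<partial>M) - (\<integral>\<omega>. un n (X \<omega>) \<partial>M)) * real (Suc m)
      - (\<integral>\<omega>. un n (X \<omega>) \<partial>M)) \<longlongrightarrow>
      ((\<integral>\<omega>. u (Xs m \<omega>) \<partial>M) - (\<integral>\<omega>. u (X \<omega>) \<partial>M)) * real (Suc m) - (\<integral>\<omega>. u (X \<omega>) \<partial>M)) F"
      by (intro tendsto_intros limX limXs)
    show ?thesis by (rule tendsto_le[OF Fnb l2 l1]) (use key_n in auto)
  qed
  define w where "w = (\<lambda>m x. (u ((1 + 1 / real (Suc m)) *\<^sub>R x) - u x) * real (Suc m) - u x)"
  have wlim: "(\<lambda>m. w m (X \<omega>)) \<longlonglongrightarrow> S (X \<omega>)" if "\<omega> \<in> space M" for \<omega>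
    unfolding w_def S_def using Qquot XO that by (intro tendsto_intros) auto
  have wm: "(\<lambda>\<omega>. w m (X \<omega>)) \<in> borel_measurable M" for m
  proof -
    have "(\<lambda>\<omega>. u (Xs m \<omega>)) \<in> borel_measurable M" by (rule meas_comp_lip[OF mp(4) Xsm XsO])
    moreover have "(\<lambda>\<omega>. u (X \<omega>)) \<in> borel_measurable M" by (rule meas_comp_lip[OF mp(4) Xm XO])
    ultimately show ?thesis unfolding w_def Xs_def tt_def by measurable
  qed
  have Sm: "(\<lambda>\<omega>. S (X \<omega>)) \<in> borel_measurable M"
    by (rule borel_measurable_LIMSEQ_real[OF wlim wm])
  have wbound: "\<bar>w m x\<bar> \<le> 2 * B * norm x" if x: "x \<in> nonneg_orthant" for m x
  proof -
    have x': "(1 + tt m) *\<^sub>R x \<in> nonneg_orthant" using x tt0[of m] by (intro scale_O) auto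
    have "dist (u ((1 + tt m) *\<^sub>R x)) (u x) \<le> B * dist ((1 + tt m) *\<^sub>R x) x"
      by (rule lipschitz_onD[OF mp(4) x' x])
    moreover have "dist ((1 + tt m) *\<^sub>R x) x = tt m * norm x"
      using tt0[of m] by (simp add: dist_norm algebra_simps)
    ultimately have "\<bar>u ((1 + tt m) *\<^sub>R x) - u x\<bar> \<le> B * (tt m * norm x)" by (simp add: dist_real_def)
    then have "\<bar>u ((1 + tt m) *\<^sub>R x) - u x\<bar> * real (Suc m) \<le> B * (tt m * norm x) * real (Suc m)"
      by (intro mult_right_mono) auto
    moreover have "B * (tt m * norm x) * real (Suc m) = B * norm x * (tt m * real (Suc m))"
      by (simp only: mult_ac)
    moreover have "B * norm x * (tt m * real (Suc m)) = B * norm x" by (simp only: e2 mult_1_right)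
    moreover have "\<bar>u x\<bar> \<le> B * norm x" using mp(3) x by blast
    moreover have "\<bar>w m x\<bar> \<le> \<bar>u ((1 + tt m) *\<^sub>R x) - u x\<bar> * real (Suc m) + \<bar>u x\<bar>"
    proof -
      have "\<bar>(u ((1 + tt m) *\<^sub>R x) - u x) * real (Suc m) - u x\<bar>
          \<le> \<bar>(u ((1 + tt m) *\<^sub>R x) - u x) * real (Suc m)\<bar> + \<bar>u x\<bar>" by (rule abs_triangle_ineq4)
      also have "\<bar>(u ((1 + tt m) *\<^sub>R x) - u x) * real (Suc m)\<bar> = \<bar>u ((1 + tt m) *\<^sub>R x) - u x\<bar> * real (Suc m)"
        by (simp only: abs_mult abs_of_nat)
      finally show ?thesis unfolding w_def tt_def .
    qed
    ultimately show ?thesis by linarith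
  qed
  have revlim: "(\<lambda>m. \<integral>\<omega>. w m (X \<omega>) \<partial>M) \<longlonglongrightarrow> (\<integral>\<omega>. S (X \<omega>) \<partial>M)"
  proof (rule integral_dominated_convergence[where w="\<lambda>\<omega>. 2 * B * norm (X \<omega>)"])
    show "AE \<omega> in M. (\<lambda>m. w m (X \<omega>)) \<longlonglongrightarrow> S (X \<omega>)" using wlim by (intro AE_I2)
    show "AE \<omega> in M. norm (w m (X \<omega>)) \<le> 2 * B * norm (X \<omega>)" for m
      using wbound XO by (intro AE_I2) auto
  qed (use Sm wm Xi in auto)
  have wint: "(\<integral>\<omega>. w m (X \<omega>) \<partial>M) =
      ((\<integral>\<omega>. u (Xs m \<omega>) \<partial>M) - (\<integral>\<omega>. u (X \<omega>) \<partial>M)) * real (Suc m) - (\<integral>\<omega>. u (X \<omega>) \<partial>M)" for m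
  proof -
    have "(\<lambda>\<omega>. w m (X \<omega>)) = (\<lambda>\<omega>. (u (Xs m \<omega>) - u (X \<omega>)) * real (Suc m) - u (X \<omega>))"
      unfolding w_def Xs_def tt_def ..
    then show ?thesis using iuX iuXs by (simp add: Bochner_Integration.integral_diff)
  qed
  have A_le: "A \<le> revenue M X S"
    unfolding revenue_def using revlim key wint by (intro LIMSEQ_le_const) auto
  have admQ: "(Q, S) \<in> amon_mechanisms \<Gamma> M X"
    unfolding amon_mechanisms_def
  proof (intro CollectI case_prodI conjI)
    show "is_mechanism \<Gamma> Q S" using QG unfolding is_mechanism_def by blast
    show "mech_IC Q S" unfolding mech_IC_def S_def using Qsub by (force simp: inner_diff_right)
    show "mech_IR Q S" unfolding mech_IR_def S_def using mp(1) by auto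
    show "alloc_monotonic Q" unfolding alloc_monotonic_def using Qmono by blast
    show "(\<lambda>\<omega>. S (X \<omega>)) \<in> borel_measurable M" by (rule Sm)
  qed
  have "ereal (revenue M X S) \<le> AMonRev \<Gamma> M X"
    unfolding AMonRev_def using admQ by (rule SUP_upper2) simp
  then have "revenue M X S \<le> A" using AM by simp
  then have "ereal (revenue M X S) = AMonRev \<Gamma> M X" using A_le AM by simp
  then show ?thesis using admQ by blast
qed


end
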